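(* In the MUPIR setting with $S = N+U-1$ sources and $K$ messages, for every integer $S \ge 1$ and every $\theta\in[K]$, the message $W_\theta$ can be retrieved while maintaining privacy from all $S$ sources, and the rate $R$ of such private retrieval satisfies $$R \le \Big(1 + \frac{1}{S} + \cdots + \frac{1}{S^{K-1}}\Big)^{-1}.$$
   Context: Setting (MUPIR): $N$ replicated, non-communicating databases each store the same $K$ independent messages $W_1,\dots,W_K$ of $L$ bits each ($H(W_k)=L$). A central user wishes to retrieve $W_\theta$ with help of $U-1$ other users; the $S=N+U-1$ sources are the $N$ databases and the $U-1$ other users. The central user sends a query $Q^{[\theta]}_s$ to each source $s\in[S]$ and receives an answer $A^{[\theta]}_s$ (queries to users are forwarded by them to a database and the answer is relayed back). Queries are independent of messages: $I(Q^{[k]}_{1:S};W_{1:K})=0$ for all $k$. Privacy: for every source $s$ and every $k\in[K]$, $(Q^{[1]}_s,A^{[1]}_s,W_{1:K})$ and $(Q^{[k]}_s,A^{[k]}_s,W_{1:K})$ are identically distributed. Correctness: $W_\theta$ is recoverable from all answers and queries. The rate is $R=L/D=H(W_\theta)/\big(S\,H(A^{[\theta]}_1\mid Q^{[\theta]}_{1:S})\big)$, with $D$ the total number of downloaded bits. *)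

theory Defs
  imports "HOL-Probability.Probability"
begin

definition H :: "'o::finite pmf \<Rightarrow> ('o \<Rightarrow> 'b) \<Rightarrow> real" where
  "H P X = prob_space.entropy (measure_pmf P) 2 (count_space (range X)) X"

definition Hc :: "'o::finite pmf \<Rightarrow> ('o \<Rightarrow> 'b) \<Rightarrow> ('o \<Rightarrow> 'c) \<Rightarrow> real" where
  "Hc P X Y = prob_space.conditional_entropy (measure_pmf P) 2
      (count_space (range X)) (count_space (range Y)) X Y"

definition MI :: "'o::finite pmf \<Rightarrow> ('o \<Rightarrow> 'b) \<Rightarrow> ('o \<Rightarrow> 'c) \<Rightarrow> real" where
  "MI P X Y = prob_space.mutual_information (measure_pmf P) 2
      (count_space (range X)) (count_space (range Y)) X Y"

text \<open>Messages are indexed by 0..<K (paper: 1..K), sources by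
  0..<S (paper: 1..S).  W k is the k-th message.\<close>

definition msgs :: "nat \<Rightarrow> (nat \<Rightarrow> 'o \<Rightarrow> bool list) \<Rightarrow> 'o \<Rightarrow> bool list list" where
  "msgs K W = (\<lambda>\<omega>. map (\<lambda>k. W k \<omega>) [0..<K])"

definition messages_ok :: "'o::finite pmf \<Rightarrow> nat \<Rightarrow> nat \<Rightarrow> (nat \<Rightarrow> 'o \<Rightarrow> bool list) \<Rightarrow> bool" where
  "messages_ok P K L W \<longleftrightarrow>
     (\<forall>k<K. \<forall>\<omega>. length (W k \<omega>) = L) \<and>
     prob_space.indep_vars (measure_pmf P) (\<lambda>_. count_space UNIV) W {..<K} \<and>
     (\<forall>k<K. H P (W k) = real L)"

text \<open>Q t s is the query sent to source s when the desired index is t;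
  ans s is the deterministic answer function of source s (a user forwards the
  query to a database and relays the answer, so the answer is a function of the
  query and the stored messages).\<close>

definition queries :: "nat \<Rightarrow> (nat \<Rightarrow> nat \<Rightarrow> 'o \<Rightarrow> 'q) \<Rightarrow> nat \<Rightarrow> 'o \<Rightarrow> 'q list" where
  "queries S Q t = (\<lambda>\<omega>. map (\<lambda>s. Q t s \<omega>) [0..<S])"

definition answer ::
  "nat \<Rightarrow> (nat \<Rightarrow> 'o \<Rightarrow> bool list) \<Rightarrow> (nat \<Rightarrow> nat \<Rightarrow> 'o \<Rightarrow> 'q)
     \<Rightarrow> (nat \<Rightarrow> 'q \<Rightarrow> bool list list \<Rightarrow> bool list) \<Rightarrow> nat \<Rightarrow> nat \<Rightarrow> 'o \<Rightarrow> bool list" where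
  "answer K W Q ans t s = (\<lambda>\<omega>. ans s (Q t s \<omega>) (msgs K W \<omega>))"

definition answers ::
  "nat \<Rightarrow> nat \<Rightarrow> (nat \<Rightarrow> 'o \<Rightarrow> bool list) \<Rightarrow> (nat \<Rightarrow> nat \<Rightarrow> 'o \<Rightarrow> 'q)
     \<Rightarrow> (nat \<Rightarrow> 'q \<Rightarrow> bool list list \<Rightarrow> bool list) \<Rightarrow> nat \<Rightarrow> 'o \<Rightarrow> bool list list" where
  "answers S K W Q ans t = (\<lambda>\<omega>. map (\<lambda>s. answer K W Q ans t s \<omega>) [0..<S])"

definition private_scheme ::
  "'o::finite pmf \<Rightarrow> nat \<Rightarrow> nat \<Rightarrow> (nat \<Rightarrow> 'o \<Rightarrow> bool list) \<Rightarrow> (nat \<Rightarrow> nat \<Rightarrow> 'o \<Rightarrow> 'q)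
     \<Rightarrow> (nat \<Rightarrow> 'q \<Rightarrow> bool list list \<Rightarrow> bool list)
     \<Rightarrow> (nat \<Rightarrow> 'q list \<Rightarrow> bool list list \<Rightarrow> bool list) \<Rightarrow> bool" where
  "private_scheme P S K W Q ans dec \<longleftrightarrow>
     (\<forall>t<K. MI P (queries S Q t) (msgs K W) = 0) \<and>
     (\<forall>s<S. \<forall>t<K.
        map_pmf (\<lambda>\<omega>. (Q 0 s \<omega>, answer K W Q ans 0 s \<omega>, msgs K W \<omega>)) P =
        map_pmf (\<lambda>\<omega>. (Q t s \<omega>, answer K W Q ans t s \<omega>, msgs K W \<omega>)) P) \<and>
     (\<forall>t<K. \<forall>\<omega>\<in>set_pmf P. dec t (queries S Q t \<omega>) (answers S K W Q ans t \<omega>) = W t \<omega>)"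

definition rate ::
  "'o::finite pmf \<Rightarrow> nat \<Rightarrow> nat \<Rightarrow> nat \<Rightarrow> (nat \<Rightarrow> 'o \<Rightarrow> bool list) \<Rightarrow> (nat \<Rightarrow> nat \<Rightarrow> 'o \<Rightarrow> 'q)
     \<Rightarrow> (nat \<Rightarrow> 'q \<Rightarrow> bool list list \<Rightarrow> bool list) \<Rightarrow> nat \<Rightarrow> real" where
  "rate P S K L W Q ans t =
     real L / (\<Sum>s<S. Hc P (answer K W Q ans t s) (queries S Q t))"

end

theory Submission
  imports Defs
begin


definition pr :: "'o::finite pmf \<Rightarrow> ('o \<Rightarrow> 'a) \<Rightarrow> 'a \<Rightarrow> real" where
  "pr P X x = measure_pmf.prob P (X -` {x})"

definition ent :: "'o::finite pmf \<Rightarrow> ('o \<Rightarrow> 'a) \<Rightarrow> real" where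
  "ent P X = - (\<Sum>\<omega>\<in>UNIV. pmf P \<omega> * log 2 (pr P X (X \<omega>)))"

lemma pr_pos: "\<omega> \<in> set_pmf P \<Longrightarrow> pr P X (X \<omega>) > 0"
proof -
  assume a: "\<omega> \<in> set_pmf P"
  have "pmf P \<omega> = measure_pmf.prob P {\<omega>}" by (simp add: measure_pmf_single)
  also have "\<dots> \<le> pr P X (X \<omega>)" unfolding pr_def
    by (rule measure_pmf.finite_measure_mono) auto
  finally show ?thesis using a by (simp add: set_pmf_iff) (smt (verit) pmf_nonneg)
qed

lemma pr_le1: "pr P X x \<le> 1"
  unfolding pr_def by simp

lemma sum_range_pr:
  fixes P :: "'o::finite pmf"
  shows "(\<Sum>x\<in>range X. pr P X x * g x) = (\<Sum>\<omega>\<in>UNIV. pmf P \<omega> * g (X \<omega>))"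
proof -
  have "(\<Sum>x\<in>range X. pr P X x * g x) = (\<Sum>x\<in>range X. \<Sum>\<omega>\<in>{\<omega>\<in>UNIV. X \<omega> = x}. pmf P \<omega> * g (X \<omega>))"
    unfolding pr_def
    by (intro sum.cong refl) (auto simp: measure_measure_pmf_finite sum_distrib_right vimage_def intro!: sum.cong)
  also have "\<dots> = (\<Sum>\<omega>\<in>UNIV. pmf P \<omega> * g (X \<omega>))"
    by (rule sum.group) auto
  finally show ?thesis .
qed

lemma sf: "simple_function (measure_pmf (P::'o::finite pmf)) X"
  by (simp add: simple_function_def)

lemma sd: "simple_distributed (measure_pmf (P::'o::finite pmf)) X (pr P X)"
  unfolding pr_def
  by (rule measure_pmf.simple_distributedI[OF sf]) auto

lemma H_ent: "H P X = ent P X"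
proof -
  interpret information_space "measure_pmf P" 2 by unfold_locales simp
  have "H P X = - (\<Sum>x\<in>range X. pr P X x * log 2 (pr P X x))"
    unfolding H_def using entropy_simple_distributed[OF sd[of P X]] by simp
  also have "\<dots> = ent P X" unfolding ent_def sum_range_pr[of P X "\<lambda>x. log 2 (pr P X x)"] ..
  finally show ?thesis .
qed

lemma supp_eq:
  assumes "\<omega> \<in> set_pmf P \<Longrightarrow> f \<omega> = g \<omega>"
  shows "pmf P \<omega> * f \<omega> = pmf P \<omega> * g \<omega>"
  using assms by (cases "\<omega> \<in> set_pmf P") (auto simp: set_pmf_iff)

lemma Hc_ent: "Hc P X Y = ent P (\<lambda>\<omega>. (X \<omega>, Y \<omega>)) - ent P Y"
proof -
  interpret information_space "measure_pmf P" 2 by unfold_locales simp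
  let ?XY = "\<lambda>\<omega>. (X \<omega>, Y \<omega>)"
  have "Hc P X Y = - (\<Sum>(x,y)\<in>range ?XY. pr P ?XY (x,y) * log 2 (pr P ?XY (x,y) / pr P Y y))"
    unfolding Hc_def using conditional_entropy_eq[OF sd[of P Y] sd[of P ?XY]] by simp
  also have "\<dots> = - (\<Sum>z\<in>range ?XY. pr P ?XY z * log 2 (pr P ?XY z / pr P Y (snd z)))"
    by (simp add: case_prod_beta')
  also have "\<dots> = - (\<Sum>\<omega>\<in>UNIV. pmf P \<omega> * log 2 (pr P ?XY (?XY \<omega>) / pr P Y (Y \<omega>)))"
    by (subst sum_range_pr) simp
  also have "\<dots> = - (\<Sum>\<omega>\<in>UNIV. pmf P \<omega> * log 2 (pr P ?XY (?XY \<omega>)) - pmf P \<omega> * log 2 (pr P Y (Y \<omega>)))"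
    apply (intro arg_cong[where f=uminus] sum.cong refl)
    apply (subst right_diff_distrib[symmetric])
    apply (rule supp_eq)
    subgoal premises p using pr_pos[OF p(2), of ?XY] pr_pos[OF p(2), of Y] by (simp add: log_divide)
    done
  also have "\<dots> = ent P ?XY - ent P Y"
    unfolding ent_def by (simp add: sum_subtractf)
  finally show ?thesis .
qed

lemma MI_ent: "MI P X Y = ent P X + ent P Y - ent P (\<lambda>\<omega>. (X \<omega>, Y \<omega>))"
proof -
  interpret information_space "measure_pmf P" 2 by unfold_locales simp
  let ?XY = "\<lambda>\<omega>. (X \<omega>, Y \<omega>)"
  have "MI P X Y = (\<Sum>(x,y)\<in>range ?XY. pr P ?XY (x,y) * log 2 (pr P ?XY (x,y) / (pr P X x * pr P Y y)))"
    unfolding MI_def using mutual_information_simple_distributed[OF sd[of P X] sd[of P Y] sd[of P ?XY]] by simp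
  also have "\<dots> = (\<Sum>z\<in>range ?XY. pr P ?XY z * log 2 (pr P ?XY z / (pr P X (fst z) * pr P Y (snd z))))"
    by (simp add: case_prod_beta')
  also have "\<dots> = (\<Sum>\<omega>\<in>UNIV. pmf P \<omega> * log 2 (pr P ?XY (?XY \<omega>) / (pr P X (X \<omega>) * pr P Y (Y \<omega>))))"
    by (subst sum_range_pr) simp
  also have "\<dots> = (\<Sum>\<omega>\<in>UNIV. pmf P \<omega> * log 2 (pr P ?XY (?XY \<omega>)) - pmf P \<omega> * log 2 (pr P X (X \<omega>))
      - pmf P \<omega> * log 2 (pr P Y (Y \<omega>)))"
    apply (intro sum.cong refl)
    apply (subst right_diff_distrib[symmetric])+
    apply (rule supp_eq)
    subgoal premises p using pr_pos[OF p(2), of ?XY] pr_pos[OF p(2), of Y] pr_pos[OF p(2), of X]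
      by (simp add: log_divide log_mult)
    done
  also have "\<dots> = ent P X + ent P Y - ent P ?XY"
    unfolding ent_def by (simp add: sum_subtractf)
  finally show ?thesis .
qed

lemma submod:
  "ent P (\<lambda>\<omega>. (X \<omega>, Y \<omega>, Z \<omega>)) + ent P Z \<le> ent P (\<lambda>\<omega>. (X \<omega>, Z \<omega>)) + ent P (\<lambda>\<omega>. (Y \<omega>, Z \<omega>))"
proof -
  interpret information_space "measure_pmf P" 2 by unfold_locales simp
  let ?XYZ = "\<lambda>\<omega>. (X \<omega>, Y \<omega>, Z \<omega>)"
  let ?XZ = "\<lambda>\<omega>. (X \<omega>, Z \<omega>)"
  let ?YZ = "\<lambda>\<omega>. (Y \<omega>, Z \<omega>)"
  have "0 \<le> (\<Sum>(x,y,z)\<in>range ?XYZ. pr P ?XYZ (x,y,z) * log 2 (pr P ?XYZ (x,y,z) / (pr P ?XZ (x,z) * (pr P ?YZ (y,z) / pr P Z z))))"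
    using conditional_mutual_information_nonneg[OF sf[of P X] sf[of P Y] sf[of P Z]]
      conditional_mutual_information_eq[OF sd[of P Z] sd[of P ?YZ] sd[of P ?XZ] sd[of P ?XYZ]] by simp
  also have "\<dots> = (\<Sum>t\<in>range ?XYZ. pr P ?XYZ t * log 2 (pr P ?XYZ t / (pr P ?XZ (fst t, snd (snd t)) * (pr P ?YZ (snd t) / pr P Z (snd (snd t))))))"
    by (simp add: case_prod_beta')
  also have "\<dots> = (\<Sum>\<omega>\<in>UNIV. pmf P \<omega> * log 2 (pr P ?XYZ (?XYZ \<omega>) / (pr P ?XZ (?XZ \<omega>) * (pr P ?YZ (?YZ \<omega>) / pr P Z (Z \<omega>)))))"
    by (subst sum_range_pr) simp
  also have "\<dots> = (\<Sum>\<omega>\<in>UNIV. pmf P \<omega> * log 2 (pr P ?XYZ (?XYZ \<omega>)) - pmf P \<omega> * log 2 (pr P ?XZ (?XZ \<omega>))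
      - pmf P \<omega> * log 2 (pr P ?YZ (?YZ \<omega>)) + pmf P \<omega> * log 2 (pr P Z (Z \<omega>)))"
    apply (intro sum.cong refl)
    apply (subst right_diff_distrib[symmetric] distrib_left[symmetric])+
    apply (rule supp_eq)
    subgoal premises p using pr_pos[OF p(2), of ?XYZ] pr_pos[OF p(2), of ?XZ] pr_pos[OF p(2), of ?YZ] pr_pos[OF p(2), of Z]
      by (simp add: log_divide log_mult)
    done
  also have "\<dots> = - ent P ?XYZ + ent P ?XZ + ent P ?YZ - ent P Z"
    unfolding ent_def by (simp add: sum_subtractf sum.distrib)
  finally show ?thesis by simp
qed

lemma ent_cong:
  assumes "\<And>\<omega> \<omega>'. \<omega> \<in> set_pmf P \<Longrightarrow> \<omega>' \<in> set_pmf P \<Longrightarrow> (X \<omega> = X \<omega>') = (Y \<omega> = Y \<omega>')"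
  shows "ent P X = ent P Y"
  unfolding ent_def
proof (intro arg_cong[where f=uminus] sum.cong refl supp_eq)
  fix \<omega> assume w: "\<omega> \<in> set_pmf P"
  have "X -` {X \<omega>} \<inter> set_pmf P = Y -` {Y \<omega>} \<inter> set_pmf P"
  proof (intro set_eqI iffI)
    fix x assume "x \<in> X -` {X \<omega>} \<inter> set_pmf P"
    then show "x \<in> Y -` {Y \<omega>} \<inter> set_pmf P" using assms[OF w, of x] by auto
  next
    fix x assume "x \<in> Y -` {Y \<omega>} \<inter> set_pmf P"
    then show "x \<in> X -` {X \<omega>} \<inter> set_pmf P" using assms[OF w, of x] by auto
  qed
  then have "pr P X (X \<omega>) = pr P Y (Y \<omega>)"
    unfolding pr_def by (metis measure_Int_set_pmf)
  then show "log 2 (pr P X (X \<omega>)) = log 2 (pr P Y (Y \<omega>))" by simp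
qed

lemma ent_const: "ent P (\<lambda>\<omega>. c) = 0"
  unfolding ent_def pr_def by simp

lemma ent_nonneg: "0 \<le> ent P X"
  unfolding ent_def
proof -
  have "(\<Sum>\<omega>\<in>UNIV. pmf P \<omega> * log 2 (pr P X (X \<omega>))) \<le> 0"
  proof (intro sum_nonpos)
    fix \<omega>
    show "pmf P \<omega> * log 2 (pr P X (X \<omega>)) \<le> 0"
    proof (cases "\<omega> \<in> set_pmf P")
      case True
      then show ?thesis using pr_pos[OF True, of X] pr_le1[of P X]
        by (intro mult_nonneg_nonpos) auto
    qed (simp add: set_pmf_iff)
  qed
  then show "0 \<le> - (\<Sum>\<omega>\<in>UNIV. pmf P \<omega> * log 2 (pr P X (X \<omega>)))" by simp
qed

lemma ent_map:
  "ent P (\<lambda>\<omega>. g (V \<omega>)) = - measure_pmf.expectation (map_pmf V P)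
      (\<lambda>v. log 2 (measure_pmf.prob (map_pmf V P) (g -` {g v})))"
proof -
  have "ent P (\<lambda>\<omega>. g (V \<omega>)) = - measure_pmf.expectation P (\<lambda>\<omega>. log 2 (measure_pmf.prob P ((\<lambda>\<omega>. g (V \<omega>)) -` {g (V \<omega>)})))"
    unfolding ent_def pr_def
    by (subst integral_measure_pmf_real[where A=UNIV]) (auto simp: mult.commute)
  also have "\<dots> = - measure_pmf.expectation (map_pmf V P)
      (\<lambda>v. log 2 (measure_pmf.prob (map_pmf V P) (g -` {g v})))"
    by (simp add: vimage_def)
  finally show ?thesis .
qed


lemma ent_cong_all:
  "(\<And>\<omega> \<omega>'. (X \<omega> = X \<omega>') = (Y \<omega> = Y \<omega>')) \<Longrightarrow> ent P X = ent P Y"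
  by (rule ent_cong) blast

definition det :: "('o \<Rightarrow> 'a) \<Rightarrow> ('o \<Rightarrow> 'b) \<Rightarrow> bool" where
  "det X Y \<longleftrightarrow> (\<forall>\<omega> \<omega>'. X \<omega> = X \<omega>' \<longrightarrow> Y \<omega> = Y \<omega>')"

lemma detI: "(\<And>\<omega> \<omega>'. X \<omega> = X \<omega>' \<Longrightarrow> Y \<omega> = Y \<omega>') \<Longrightarrow> det X Y"
  unfolding det_def by blast

lemma ent_eq: "det X Y \<Longrightarrow> det Y X \<Longrightarrow> ent P X = ent P Y"
  unfolding det_def by (rule ent_cong_all) blast

lemma ent_det_pair: assumes d: "det Y X" shows "ent P (\<lambda>\<omega>. (Y \<omega>, X \<omega>)) = ent P Y"
proof (rule ent_cong_all)
  fix \<omega> \<omega>' show "((Y \<omega>, X \<omega>) = (Y \<omega>', X \<omega>')) = (Y \<omega> = Y \<omega>')"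
    using d[unfolded det_def, rule_format, of \<omega> \<omega>'] by auto
qed

lemma ent_det_pair': assumes d: "det Y X" shows "ent P (\<lambda>\<omega>. (X \<omega>, Y \<omega>)) = ent P Y"
proof (rule ent_cong_all)
  fix \<omega> \<omega>' show "((X \<omega>, Y \<omega>) = (X \<omega>', Y \<omega>')) = (Y \<omega> = Y \<omega>')"
    using d[unfolded det_def, rule_format, of \<omega> \<omega>'] by auto
qed

lemma ent_pair_ge: "ent P X \<le> ent P (\<lambda>\<omega>. (Y \<omega>, X \<omega>))"
proof -
  have a: "ent P (\<lambda>\<omega>. (Y \<omega>, Y \<omega>, X \<omega>)) + ent P X \<le> ent P (\<lambda>\<omega>. (Y \<omega>, X \<omega>)) + ent P (\<lambda>\<omega>. (Y \<omega>, X \<omega>))"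
    by (rule submod[of P Y Y X])
  have b: "ent P (\<lambda>\<omega>. (Y \<omega>, Y \<omega>, X \<omega>)) = ent P (\<lambda>\<omega>. (Y \<omega>, X \<omega>))"
    by (rule ent_cong_all) auto
  show ?thesis using a b by linarith
qed

lemma ent_mono: "det Y X \<Longrightarrow> ent P X \<le> ent P Y"
proof -
  assume d: "det Y X"
  have "ent P (\<lambda>\<omega>. (Y \<omega>, X \<omega>)) = ent P Y"
    using d by (rule ent_det_pair)
  then show ?thesis using ent_pair_ge[of P X Y] by linarith
qed

lemma ent_swap: "ent P (\<lambda>\<omega>. (X \<omega>, Y \<omega>)) = ent P (\<lambda>\<omega>. (Y \<omega>, X \<omega>))"
  by (rule ent_cong_all) auto

lemma subadd: "ent P (\<lambda>\<omega>. (X \<omega>, Y \<omega>)) \<le> ent P X + ent P Y"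
proof -
  have "ent P (\<lambda>\<omega>. (X \<omega>, Y \<omega>, ())) + ent P (\<lambda>\<omega>. ()) \<le> ent P (\<lambda>\<omega>. (X \<omega>, ())) + ent P (\<lambda>\<omega>. (Y \<omega>, ()))"
    by (rule submod[of P X Y "\<lambda>\<omega>. ()"])
  moreover have "ent P (\<lambda>\<omega>. (X \<omega>, Y \<omega>, ())) = ent P (\<lambda>\<omega>. (X \<omega>, Y \<omega>))" by (rule ent_cong_all) auto
  moreover have "ent P (\<lambda>\<omega>. (X \<omega>, ())) = ent P X" by (rule ent_cong_all) auto
  moreover have "ent P (\<lambda>\<omega>. (Y \<omega>, ())) = ent P Y" by (rule ent_cong_all) auto
  ultimately show ?thesis using ent_const[of P "()"] by linarith
qed

lemma indep_left:
  assumes ind: "ent P (\<lambda>\<omega>. (X \<omega>, Y \<omega>)) = ent P X + ent P Y" and d: "det X X'"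
  shows "ent P (\<lambda>\<omega>. (X' \<omega>, Y \<omega>)) = ent P X' + ent P Y"
proof -
  have "ent P (\<lambda>\<omega>. (X \<omega>, Y \<omega>, X' \<omega>)) + ent P X' \<le> ent P (\<lambda>\<omega>. (X \<omega>, X' \<omega>)) + ent P (\<lambda>\<omega>. (Y \<omega>, X' \<omega>))"
    by (rule submod[of P X Y X'])
  moreover have "ent P (\<lambda>\<omega>. (X \<omega>, Y \<omega>, X' \<omega>)) = ent P (\<lambda>\<omega>. (X \<omega>, Y \<omega>))"
  proof (rule ent_cong_all)
    fix \<omega> \<omega>' show "((X \<omega>, Y \<omega>, X' \<omega>) = (X \<omega>', Y \<omega>', X' \<omega>')) = ((X \<omega>, Y \<omega>) = (X \<omega>', Y \<omega>'))"
      using d[unfolded det_def, rule_format, of \<omega> \<omega>'] by auto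
  qed
  moreover have "ent P (\<lambda>\<omega>. (X \<omega>, X' \<omega>)) = ent P X"
    using d by (rule ent_det_pair)
  moreover have "ent P (\<lambda>\<omega>. (Y \<omega>, X' \<omega>)) = ent P (\<lambda>\<omega>. (X' \<omega>, Y \<omega>))" by (rule ent_swap)
  ultimately show ?thesis using ind subadd[of P X' Y] by linarith
qed

lemma indep_fun:
  assumes ind: "ent P (\<lambda>\<omega>. (X \<omega>, Y \<omega>)) = ent P X + ent P Y" and d: "det X X'" and d2: "det Y Y'"
  shows "ent P (\<lambda>\<omega>. (X' \<omega>, Y' \<omega>)) = ent P X' + ent P Y'"
proof -
  have 1: "ent P (\<lambda>\<omega>. (X' \<omega>, Y \<omega>)) = ent P X' + ent P Y" by (rule indep_left[OF ind d])
  have 2: "ent P (\<lambda>\<omega>. (X' \<omega>, Y \<omega>)) = ent P (\<lambda>\<omega>. (Y \<omega>, X' \<omega>))" by (rule ent_swap)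
  have 3: "ent P (\<lambda>\<omega>. (Y \<omega>, X' \<omega>)) = ent P Y + ent P X'" using 1 2 by linarith
  have 4: "ent P (\<lambda>\<omega>. (Y' \<omega>, X' \<omega>)) = ent P Y' + ent P X'" by (rule indep_left[of P Y X' Y', OF 3 d2])
  have 5: "ent P (\<lambda>\<omega>. (X' \<omega>, Y' \<omega>)) = ent P (\<lambda>\<omega>. (Y' \<omega>, X' \<omega>))" by (rule ent_swap)
  show ?thesis using 4 5 by linarith
qed

lemma cond_reduce:
  assumes d: "det Z' Z"
  shows "ent P (\<lambda>\<omega>. (X \<omega>, Z' \<omega>)) - ent P Z' \<le> ent P (\<lambda>\<omega>. (X \<omega>, Z \<omega>)) - ent P Z"
proof -
  have "ent P (\<lambda>\<omega>. (X \<omega>, Z' \<omega>, Z \<omega>)) + ent P Z \<le> ent P (\<lambda>\<omega>. (X \<omega>, Z \<omega>)) + ent P (\<lambda>\<omega>. (Z' \<omega>, Z \<omega>))"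
    by (rule submod[of P X Z' Z])
  moreover have "ent P (\<lambda>\<omega>. (X \<omega>, Z' \<omega>, Z \<omega>)) = ent P (\<lambda>\<omega>. (X \<omega>, Z' \<omega>))"
  proof (rule ent_cong_all)
    fix \<omega> \<omega>' show "((X \<omega>, Z' \<omega>, Z \<omega>) = (X \<omega>', Z' \<omega>', Z \<omega>')) = ((X \<omega>, Z' \<omega>) = (X \<omega>', Z' \<omega>'))"
      using d[unfolded det_def, rule_format, of \<omega> \<omega>'] by auto
  qed
  moreover have "ent P (\<lambda>\<omega>. (Z' \<omega>, Z \<omega>)) = ent P Z'"
    using d by (rule ent_det_pair)
  ultimately show ?thesis by linarith
qed

lemma cond_subadd:
  "ent P (\<lambda>\<omega>. (map (\<lambda>s. X s \<omega>) [0..<n], Z \<omega>)) - ent P Z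
     \<le> (\<Sum>s<n. ent P (\<lambda>\<omega>. (X s \<omega>, Z \<omega>)) - ent P Z)"
proof (induction n)
  case 0
  have "ent P (\<lambda>\<omega>. (map (\<lambda>s. X s \<omega>) [0..<0], Z \<omega>)) = ent P Z" by (rule ent_cong_all) auto
  then show ?case by simp
next
  case (Suc n)
  let ?M = "\<lambda>\<omega>. map (\<lambda>s. X s \<omega>) [0..<n]"
  have "ent P (\<lambda>\<omega>. (?M \<omega>, X n \<omega>, Z \<omega>)) + ent P Z \<le> ent P (\<lambda>\<omega>. (?M \<omega>, Z \<omega>)) + ent P (\<lambda>\<omega>. (X n \<omega>, Z \<omega>))"
    by (rule submod[of P ?M "X n" Z])
  moreover have "ent P (\<lambda>\<omega>. (map (\<lambda>s. X s \<omega>) [0..<Suc n], Z \<omega>)) = ent P (\<lambda>\<omega>. (?M \<omega>, X n \<omega>, Z \<omega>))"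
    by (rule ent_cong_all) auto
  ultimately show ?case using Suc.IH by simp
qed

lemma prod_indep:
  assumes "\<And>\<omega>. pr P (\<lambda>\<omega>. (X \<omega>, Y \<omega>)) (X \<omega>, Y \<omega>) = pr P X (X \<omega>) * pr P Y (Y \<omega>)"
  shows "ent P (\<lambda>\<omega>. (X \<omega>, Y \<omega>)) = ent P X + ent P Y"
proof -
  have "ent P (\<lambda>\<omega>. (X \<omega>, Y \<omega>)) = - (\<Sum>\<omega>\<in>UNIV. pmf P \<omega> * log 2 (pr P X (X \<omega>)) + pmf P \<omega> * log 2 (pr P Y (Y \<omega>)))"
    unfolding ent_def
    apply (intro arg_cong[where f=uminus] sum.cong refl)
    apply (subst distrib_left[symmetric])
    apply (rule supp_eq)
    subgoal premises p using pr_pos[OF p(2), of X] pr_pos[OF p(2), of Y]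
      by (simp add: log_mult assms)
    done
  then show ?thesis unfolding ent_def by (simp add: sum.distrib)
qed



definition WT :: "(nat \<Rightarrow> 'o \<Rightarrow> bool list) \<Rightarrow> nat set \<Rightarrow> 'o \<Rightarrow> (nat \<Rightarrow> bool list)" where
  "WT W T \<omega> = (\<lambda>j. if j \<in> T then W j \<omega> else [])"

lemma WT_eq: "(WT W T \<omega> = WT W T \<omega>') \<longleftrightarrow> (\<forall>j\<in>T. W j \<omega> = W j \<omega>')"
  unfolding WT_def fun_eq_iff by (metis (full_types))

lemma msgs_eq: "(msgs K W \<omega> = msgs K W \<omega>') \<longleftrightarrow> (\<forall>j<K. W j \<omega> = W j \<omega>')"
  unfolding msgs_def by (auto simp: map_eq_conv)

lemma queries_eq: "(queries S Q t \<omega> = queries S Q t \<omega>') \<longleftrightarrow> (\<forall>s<S. Q t s \<omega> = Q t s \<omega>')"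
  unfolding queries_def by (auto simp: map_eq_conv)

lemma answers_eq: "(answers S K W Q ans t \<omega> = answers S K W Q ans t \<omega>') \<longleftrightarrow>
    (\<forall>s<S. answer K W Q ans t s \<omega> = answer K W Q ans t s \<omega>')"
  unfolding answers_def by (auto simp: map_eq_conv)

lemma restrict_eq: "(restrict f A = restrict g A) \<longleftrightarrow> (\<forall>i\<in>A. f i = g i)"
  by (metis restrict_apply' restrict_ext)

lemma singleton_PiM: "finite A \<Longrightarrow> {restrict f A} \<in> sets (PiM A (\<lambda>_. count_space UNIV))"
proof -
  assume A: "finite A"
  have "(\<Pi>\<^sub>E x\<in>A. {restrict f A x}) = (\<Pi>\<^sub>E x\<in>A. {f x})" by (rule PiE_cong) simp
  then have "{restrict f A} = (\<Pi>\<^sub>E x\<in>A. {f x})" using PiE_singleton[of "restrict f A" A] by simp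
  then show ?thesis using sets_PiM_I_finite[OF A, of "\<lambda>i. {f i}" "\<lambda>_. count_space UNIV"] by simp
qed

context
  fixes P :: "'o::finite pmf" and S K L :: nat and W :: "nat \<Rightarrow> 'o \<Rightarrow> bool list"
    and Q :: "nat \<Rightarrow> nat \<Rightarrow> 'o \<Rightarrow> 'q" and ans dec
  assumes S1: "1 \<le> S" and mok: "messages_ok P K L W" and ps: "private_scheme P S K W Q ans dec"
begin

lemma indQW: "k < K \<Longrightarrow> ent P (\<lambda>\<omega>. (msgs K W \<omega>, queries S Q k \<omega>)) = ent P (msgs K W) + ent P (queries S Q k)"
  using ps MI_ent[of P "queries S Q k" "msgs K W"] ent_swap[of P "queries S Q k" "msgs K W"]
  unfolding private_scheme_def by auto

lemma indW:
  assumes k: "k < K"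
  shows "ent P (msgs K W) = real L + ent P (WT W ({..<K}-{k}))"
proof -
  let ?B = "{..<K}-{k}"
  define Xr where "Xr = (\<lambda>\<omega>. restrict (\<lambda>i. W i \<omega>) {k})"
  define Yr where "Yr = (\<lambda>\<omega>. restrict (\<lambda>i. W i \<omega>) ?B)"
  have iv: "prob_space.indep_vars (measure_pmf P) (\<lambda>_. count_space UNIV) W {..<K}"
    using mok unfolding messages_ok_def by blast
  have ivr: "prob_space.indep_var (measure_pmf P) (PiM {k} (\<lambda>_. count_space UNIV)) Xr (PiM ?B (\<lambda>_. count_space UNIV)) Yr"
    unfolding Xr_def Yr_def by (rule prob_space.indep_var_restrict[OF prob_space_measure_pmf iv]) (use k in auto)
  have prod: "pr P (\<lambda>\<omega>. (Xr \<omega>, Yr \<omega>)) (Xr \<omega>, Yr \<omega>) = pr P Xr (Xr \<omega>) * pr P Yr (Yr \<omega>)" for \<omega>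
  proof -
    have "measure_pmf.prob P ((\<lambda>x. (Xr x, Yr x)) -` ({Xr \<omega>} \<times> {Yr \<omega>}) \<inter> space (measure_pmf P)) =
      measure_pmf.prob P (Xr -` {Xr \<omega>} \<inter> space (measure_pmf P)) * measure_pmf.prob P (Yr -` {Yr \<omega>} \<inter> space (measure_pmf P))"
      by (rule prob_space.indep_varD[OF prob_space_measure_pmf ivr]) (auto simp: Xr_def Yr_def intro!: singleton_PiM)
    then show ?thesis unfolding pr_def by simp
  qed
  have "ent P (msgs K W) = ent P (\<lambda>\<omega>. (Xr \<omega>, Yr \<omega>))"
  proof (rule ent_cong_all)
    fix \<omega> \<omega>' show "(msgs K W \<omega> = msgs K W \<omega>') = ((Xr \<omega>, Yr \<omega>) = (Xr \<omega>', Yr \<omega>'))"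
      unfolding msgs_eq Xr_def Yr_def prod.inject restrict_eq using k by auto
  qed
  also have "\<dots> = ent P Xr + ent P Yr" by (rule prod_indep[OF prod])
  also have "ent P Xr = ent P (W k)"
  proof (rule ent_cong_all)
    fix \<omega> \<omega>' show "(Xr \<omega> = Xr \<omega>') = (W k \<omega> = W k \<omega>')"
      unfolding Xr_def restrict_eq by auto
  qed
  also have "\<dots> = real L" using mok k H_ent[of P "W k"] unfolding messages_ok_def by auto
  also have "ent P Yr = ent P (WT W ?B)"
  proof (rule ent_cong_all)
    fix \<omega> \<omega>' show "(Yr \<omega> = Yr \<omega>') = (WT W ?B \<omega> = WT W ?B \<omega>')"
      unfolding Yr_def restrict_eq WT_eq by auto
  qed
  finally show ?thesis .
qed

abbreviation "Mw \<equiv> msgs K W"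
abbreviation "Qa \<equiv> queries S Q"
abbreviation "As \<equiv> answer K W Q ans"
abbreviation "Aa \<equiv> answers S K W Q ans"

lemma dWT: "T \<subseteq> {..<K} \<Longrightarrow> Mw \<omega> = Mw \<omega>' \<Longrightarrow> WT W T \<omega> = WT W T \<omega>'"
  unfolding msgs_eq WT_eq by auto

lemma dQ: "s < S \<Longrightarrow> Qa k \<omega> = Qa k \<omega>' \<Longrightarrow> Q k s \<omega> = Q k s \<omega>'"
  unfolding queries_eq by auto

lemma dA: "Mw \<omega> = Mw \<omega>' \<Longrightarrow> Q k s \<omega> = Q k s \<omega>' \<Longrightarrow> As k s \<omega> = As k s \<omega>'"
  unfolding answer_def by simp

lemma dAa: "s < S \<Longrightarrow> Aa k \<omega> = Aa k \<omega>' \<Longrightarrow> As k s \<omega> = As k s \<omega>'"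
  unfolding answers_eq by auto

lemma msg_step:
  assumes k: "k < K" and kT: "k \<notin> T" and T: "T \<subseteq> {..<K}" and j: "j < K"
  shows "real L \<le> ent P (\<lambda>\<omega>. (WT W (insert k T) \<omega>, Qa j \<omega>)) - ent P (\<lambda>\<omega>. (WT W T \<omega>, Qa j \<omega>))"
proof -
  define R where "R = {..<K} - insert k T"
  define B where "B = {..<K} - {k}"
  have sm: "ent P (\<lambda>\<omega>. (W k \<omega>, WT W R \<omega>, WT W T \<omega>, Qa j \<omega>)) + ent P (\<lambda>\<omega>. (WT W T \<omega>, Qa j \<omega>))
     \<le> ent P (\<lambda>\<omega>. (W k \<omega>, WT W T \<omega>, Qa j \<omega>)) + ent P (\<lambda>\<omega>. (WT W R \<omega>, WT W T \<omega>, Qa j \<omega>))"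
    by (rule submod[of P "W k" "WT W R" "\<lambda>\<omega>. (WT W T \<omega>, Qa j \<omega>)"])
  have e1: "ent P (\<lambda>\<omega>. (W k \<omega>, WT W R \<omega>, WT W T \<omega>, Qa j \<omega>)) = ent P (\<lambda>\<omega>. (Mw \<omega>, Qa j \<omega>))"
  proof (rule ent_cong_all)
    fix \<omega> \<omega>'
    show "((W k \<omega>, WT W R \<omega>, WT W T \<omega>, Qa j \<omega>) = (W k \<omega>', WT W R \<omega>', WT W T \<omega>', Qa j \<omega>')) =
          ((Mw \<omega>, Qa j \<omega>) = (Mw \<omega>', Qa j \<omega>'))"
      unfolding prod.inject WT_eq msgs_eq R_def using k T by auto
  qed
  have e2: "ent P (\<lambda>\<omega>. (W k \<omega>, WT W T \<omega>, Qa j \<omega>)) = ent P (\<lambda>\<omega>. (WT W (insert k T) \<omega>, Qa j \<omega>))"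
  proof (rule ent_cong_all)
    fix \<omega> \<omega>'
    show "((W k \<omega>, WT W T \<omega>, Qa j \<omega>) = (W k \<omega>', WT W T \<omega>', Qa j \<omega>')) =
          ((WT W (insert k T) \<omega>, Qa j \<omega>) = (WT W (insert k T) \<omega>', Qa j \<omega>'))"
      unfolding prod.inject WT_eq by auto
  qed
  have e3: "ent P (\<lambda>\<omega>. (WT W R \<omega>, WT W T \<omega>, Qa j \<omega>)) = ent P (\<lambda>\<omega>. (WT W B \<omega>, Qa j \<omega>))"
  proof (rule ent_cong_all)
    fix \<omega> \<omega>'
    show "((WT W R \<omega>, WT W T \<omega>, Qa j \<omega>) = (WT W R \<omega>', WT W T \<omega>', Qa j \<omega>')) =
          ((WT W B \<omega>, Qa j \<omega>) = (WT W B \<omega>', Qa j \<omega>'))"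
      unfolding prod.inject WT_eq R_def B_def using kT T by auto
  qed
  have e4: "ent P (\<lambda>\<omega>. (WT W B \<omega>, Qa j \<omega>)) \<le> ent P (WT W B) + ent P (Qa j)" by (rule subadd)
  have e5: "ent P (\<lambda>\<omega>. (Mw \<omega>, Qa j \<omega>)) = ent P Mw + ent P (Qa j)" by (rule indQW[OF j])
  have e6: "ent P Mw = real L + ent P (WT W B)" unfolding B_def by (rule indW[OF k])
  show ?thesis using sm e1 e2 e3 e4 e5 e6 by linarith
qed

lemma step_reduce:
  assumes s: "s < S" and k: "k < K" and T: "T \<subseteq> {..<K}"
  shows "ent P (\<lambda>\<omega>. (As k s \<omega>, WT W T \<omega>, Q k s \<omega>)) - ent P (\<lambda>\<omega>. (WT W T \<omega>, Q k s \<omega>))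
       \<le> ent P (\<lambda>\<omega>. (As k s \<omega>, WT W T \<omega>, Qa k \<omega>)) - ent P (\<lambda>\<omega>. (WT W T \<omega>, Qa k \<omega>))"
proof -
  define Z where "Z = (\<lambda>\<omega>. (As k s \<omega>, WT W T \<omega>, Q k s \<omega>))"
  have sm: "ent P (\<lambda>\<omega>. (Mw \<omega>, Qa k \<omega>, Z \<omega>)) + ent P Z \<le> ent P (\<lambda>\<omega>. (Mw \<omega>, Z \<omega>)) + ent P (\<lambda>\<omega>. (Qa k \<omega>, Z \<omega>))"
    by (rule submod[of P Mw "Qa k" Z])
  have c1: "ent P (\<lambda>\<omega>. (Mw \<omega>, Qa k \<omega>, Z \<omega>)) = ent P (\<lambda>\<omega>. (Mw \<omega>, Qa k \<omega>))"
  proof (rule ent_cong_all)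
    fix \<omega> \<omega>'
    show "((Mw \<omega>, Qa k \<omega>, Z \<omega>) = (Mw \<omega>', Qa k \<omega>', Z \<omega>')) = ((Mw \<omega>, Qa k \<omega>) = (Mw \<omega>', Qa k \<omega>'))"
      unfolding Z_def prod.inject using dWT[OF T, of \<omega> \<omega>'] dQ[OF s, of k \<omega> \<omega>'] dA[of \<omega> \<omega>' k s] by auto
  qed
  have c2: "ent P (\<lambda>\<omega>. (Mw \<omega>, Z \<omega>)) = ent P (\<lambda>\<omega>. (Mw \<omega>, Q k s \<omega>))"
  proof (rule ent_cong_all)
    fix \<omega> \<omega>'
    show "((Mw \<omega>, Z \<omega>) = (Mw \<omega>', Z \<omega>')) = ((Mw \<omega>, Q k s \<omega>) = (Mw \<omega>', Q k s \<omega>'))"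
      unfolding Z_def prod.inject using dWT[OF T, of \<omega> \<omega>'] dA[of \<omega> \<omega>' k s] by auto
  qed
  have c3: "ent P (\<lambda>\<omega>. (Qa k \<omega>, Z \<omega>)) = ent P (\<lambda>\<omega>. (As k s \<omega>, WT W T \<omega>, Qa k \<omega>))"
  proof (rule ent_cong_all)
    fix \<omega> \<omega>'
    show "((Qa k \<omega>, Z \<omega>) = (Qa k \<omega>', Z \<omega>')) = ((As k s \<omega>, WT W T \<omega>, Qa k \<omega>) = (As k s \<omega>', WT W T \<omega>', Qa k \<omega>'))"
      unfolding Z_def prod.inject using dQ[OF s, of k \<omega> \<omega>'] by auto
  qed
  have c4: "ent P (\<lambda>\<omega>. (Mw \<omega>, Q k s \<omega>)) \<le> ent P Mw + ent P (Q k s)" by (rule subadd)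
  have c5: "ent P (\<lambda>\<omega>. (WT W T \<omega>, Qa k \<omega>)) \<le> ent P (WT W T) + ent P (Qa k)" by (rule subadd)
  have c6: "ent P (\<lambda>\<omega>. (WT W T \<omega>, Q k s \<omega>)) = ent P (WT W T) + ent P (Q k s)"
    by (rule indep_fun[OF indQW[OF k]]) (auto simp: det_def intro: dWT[OF T] dQ[OF s])
  have c7: "ent P (\<lambda>\<omega>. (Mw \<omega>, Qa k \<omega>)) = ent P Mw + ent P (Qa k)" by (rule indQW[OF k])
  show ?thesis using sm c1 c2 c3 c4 c5 c6 c7 unfolding Z_def by linarith
qed

definition "Vt t s = (\<lambda>\<omega>. (Q t s \<omega>, As t s \<omega>, Mw \<omega>))"

lemma priv_ent:
  assumes s: "s < S" and k: "k < K" and k': "k' < K"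
  shows "ent P (\<lambda>\<omega>. g (Vt k s \<omega>)) = ent P (\<lambda>\<omega>. g (Vt k' s \<omega>))"
proof -
  have pv: "\<forall>s<S. \<forall>t<K. map_pmf (Vt 0 s) P = map_pmf (Vt t s) P"
    using ps unfolding private_scheme_def Vt_def by blast
  have "map_pmf (Vt k s) P = map_pmf (Vt k' s) P"
    using pv[rule_format, OF s k] pv[rule_format, OF s k'] by simp
  then show ?thesis by (simp only: ent_map)
qed

lemma priv_step:
  assumes s: "s < S" and k: "k < K" and k': "k' < K" and T: "T \<subseteq> {..<K}"
  shows "ent P (\<lambda>\<omega>. (As k s \<omega>, WT W T \<omega>, Q k s \<omega>)) - ent P (\<lambda>\<omega>. (WT W T \<omega>, Q k s \<omega>))
       = ent P (\<lambda>\<omega>. (As k' s \<omega>, WT W T \<omega>, Q k' s \<omega>)) - ent P (\<lambda>\<omega>. (WT W T \<omega>, Q k' s \<omega>))"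
proof -
  define wm where "wm = (\<lambda>m::bool list list. (\<lambda>j. if j \<in> T then m ! j else []))"
  have wt: "WT W T \<omega> = wm (Mw \<omega>)" for \<omega>
    unfolding wm_def WT_def msgs_def using T by (auto simp: fun_eq_iff)
  have 1: "(\<lambda>\<omega>. (As t s \<omega>, WT W T \<omega>, Q t s \<omega>)) = (\<lambda>\<omega>. (\<lambda>(q,a,m). (a, wm m, q)) (Vt t s \<omega>))" for t
    unfolding Vt_def wt by simp
  have 2: "(\<lambda>\<omega>. (WT W T \<omega>, Q t s \<omega>)) = (\<lambda>\<omega>. (\<lambda>(q,a,m). (wm m, q)) (Vt t s \<omega>))" for t
    unfolding Vt_def wt by simp
  show ?thesis unfolding 1 2
    using priv_ent[OF s k k', of "\<lambda>(q,a,m). (a, wm m, q)"] priv_ent[OF s k k', of "\<lambda>(q,a,m). (wm m, q)"]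
    by linarith
qed

lemma corr_cong:
  assumes k: "k < K"
  shows "ent P (\<lambda>\<omega>. (Aa k \<omega>, WT W T \<omega>, Qa k \<omega>)) = ent P (\<lambda>\<omega>. (Aa k \<omega>, WT W (insert k T) \<omega>, Qa k \<omega>))"
proof (rule ent_cong)
  fix \<omega> \<omega>' assume a: "\<omega> \<in> set_pmf P" and b: "\<omega>' \<in> set_pmf P"
  have c: "\<forall>t<K. \<forall>\<omega>\<in>set_pmf P. dec t (Qa t \<omega>) (Aa t \<omega>) = W t \<omega>"
    using ps unfolding private_scheme_def by blast
  have e1: "W k \<omega> = dec k (Qa k \<omega>) (Aa k \<omega>)" using c[rule_format, OF k a] by (rule sym)
  have e2: "W k \<omega>' = dec k (Qa k \<omega>') (Aa k \<omega>')" using c[rule_format, OF k b] by (rule sym)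
  show "((Aa k \<omega>, WT W T \<omega>, Qa k \<omega>) = (Aa k \<omega>', WT W T \<omega>', Qa k \<omega>')) =
        ((Aa k \<omega>, WT W (insert k T) \<omega>, Qa k \<omega>) = (Aa k \<omega>', WT W (insert k T) \<omega>', Qa k \<omega>'))"
    unfolding prod.inject WT_eq using e1 e2 by auto
qed

lemma sum_geom_shift: "(\<Sum>i<Suc n. (1 / real S) ^ i) = 1 + (1 / real S) * (\<Sum>i<n. (1 / real S) ^ i)"
  by (subst sum.lessThan_Suc_shift) (simp add: sum_distrib_left)

lemma main:
  "1 \<le> n \<Longrightarrow> T \<subseteq> {..<K} \<Longrightarrow> k < K \<Longrightarrow> k \<notin> T \<Longrightarrow> card T + n = K \<Longrightarrow>
   real L * (\<Sum>i<n. (1 / real S) ^ i) \<le>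
     ent P (\<lambda>\<omega>. (Aa k \<omega>, WT W T \<omega>, Qa k \<omega>)) - ent P (\<lambda>\<omega>. (WT W T \<omega>, Qa k \<omega>))"
proof (induction n arbitrary: T k)
  case 0
  then show ?case by simp
next
  case (Suc n)
  note T = Suc.prems(2) and k = Suc.prems(3) and kT = Suc.prems(4) and cardT = Suc.prems(5)
  define T' where "T' = insert k T"
  have T': "T' \<subseteq> {..<K}" using T k unfolding T'_def by auto
  have finT: "finite T" using T finite_subset by blast
  have cT': "card T' + n = K" unfolding T'_def using finT kT cardT by simp
  define F' where "F' = ent P (\<lambda>\<omega>. (Aa k \<omega>, WT W T' \<omega>, Qa k \<omega>)) - ent P (\<lambda>\<omega>. (WT W T' \<omega>, Qa k \<omega>))"
  have split: "ent P (\<lambda>\<omega>. (Aa k \<omega>, WT W T \<omega>, Qa k \<omega>)) - ent P (\<lambda>\<omega>. (WT W T \<omega>, Qa k \<omega>))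
     = F' + (ent P (\<lambda>\<omega>. (WT W T' \<omega>, Qa k \<omega>)) - ent P (\<lambda>\<omega>. (WT W T \<omega>, Qa k \<omega>)))"
    unfolding F'_def T'_def using corr_cong[OF k, of T] by linarith
  have ms: "real L \<le> ent P (\<lambda>\<omega>. (WT W T' \<omega>, Qa k \<omega>)) - ent P (\<lambda>\<omega>. (WT W T \<omega>, Qa k \<omega>))"
    unfolding T'_def by (rule msg_step[OF k kT T k])
  show ?case
  proof (cases "n = 0")
    case True
    have "ent P (\<lambda>\<omega>. (WT W T' \<omega>, Qa k \<omega>)) \<le> ent P (\<lambda>\<omega>. (Aa k \<omega>, WT W T' \<omega>, Qa k \<omega>))"
      by (rule ent_mono) (auto simp: det_def)
    then have "0 \<le> F'" unfolding F'_def by linarith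
    then show ?thesis using split ms True by simp
  next
    case False
    have "\<not> {..<K} \<subseteq> T'"
    proof
      assume "{..<K} \<subseteq> T'"
      then have "card {..<K} \<le> card T'" using T' finite_subset by (intro card_mono) auto
      then show False using cT' False by simp
    qed
    then obtain k' where k': "k' < K" and k'T: "k' \<notin> T'" by auto
    have IH: "real L * (\<Sum>i<n. (1 / real S) ^ i) \<le>
       ent P (\<lambda>\<omega>. (Aa k' \<omega>, WT W T' \<omega>, Qa k' \<omega>)) - ent P (\<lambda>\<omega>. (WT W T' \<omega>, Qa k' \<omega>))"
      using Suc.IH[OF _ T' k' k'T cT'] False by simp
    define ck where "ck s = ent P (\<lambda>\<omega>. (As k s \<omega>, WT W T' \<omega>, Qa k \<omega>)) - ent P (\<lambda>\<omega>. (WT W T' \<omega>, Qa k \<omega>))" for s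
    define ck' where "ck' s = ent P (\<lambda>\<omega>. (As k' s \<omega>, WT W T' \<omega>, Qa k' \<omega>)) - ent P (\<lambda>\<omega>. (WT W T' \<omega>, Qa k' \<omega>))" for s
    have each: "ck' s \<le> ck s" if s: "s < S" for s
    proof -
      have a: "ck' s \<le> ent P (\<lambda>\<omega>. (As k' s \<omega>, WT W T' \<omega>, Q k' s \<omega>)) - ent P (\<lambda>\<omega>. (WT W T' \<omega>, Q k' s \<omega>))"
        unfolding ck'_def
        by (rule cond_reduce[where Z'="\<lambda>\<omega>. (WT W T' \<omega>, Qa k' \<omega>)" and Z="\<lambda>\<omega>. (WT W T' \<omega>, Q k' s \<omega>)" and P=P and X="As k' s"])
           (auto simp: det_def intro: dQ[OF s])
      have b: "ent P (\<lambda>\<omega>. (As k' s \<omega>, WT W T' \<omega>, Q k' s \<omega>)) - ent P (\<lambda>\<omega>. (WT W T' \<omega>, Q k' s \<omega>))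
         = ent P (\<lambda>\<omega>. (As k s \<omega>, WT W T' \<omega>, Q k s \<omega>)) - ent P (\<lambda>\<omega>. (WT W T' \<omega>, Q k s \<omega>))"
        by (rule priv_step[OF s k' k T'])
      have c: "ent P (\<lambda>\<omega>. (As k s \<omega>, WT W T' \<omega>, Q k s \<omega>)) - ent P (\<lambda>\<omega>. (WT W T' \<omega>, Q k s \<omega>)) \<le> ck s"
        unfolding ck_def by (rule step_reduce[OF s k T'])
      show ?thesis using a b c by linarith
    qed
    have each2: "ck s \<le> F'" if s: "s < S" for s
    proof -
      have "ent P (\<lambda>\<omega>. (As k s \<omega>, WT W T' \<omega>, Qa k \<omega>)) \<le> ent P (\<lambda>\<omega>. (Aa k \<omega>, WT W T' \<omega>, Qa k \<omega>))"
        by (rule ent_mono) (auto simp: det_def intro: dAa[OF s])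
      then show ?thesis unfolding ck_def F'_def by linarith
    qed
    have cs0: "ent P (\<lambda>\<omega>. (map (\<lambda>s. As k' s \<omega>) [0..<S], WT W T' \<omega>, Qa k' \<omega>)) - ent P (\<lambda>\<omega>. (WT W T' \<omega>, Qa k' \<omega>))
       \<le> (\<Sum>s<S. ck' s)"
      unfolding ck'_def by (rule cond_subadd[where P=P and X="As k'" and Z="\<lambda>\<omega>. (WT W T' \<omega>, Qa k' \<omega>)" and n=S])
    have aeq: "(\<lambda>\<omega>. (Aa k' \<omega>, WT W T' \<omega>, Qa k' \<omega>)) = (\<lambda>\<omega>. (map (\<lambda>s. As k' s \<omega>) [0..<S], WT W T' \<omega>, Qa k' \<omega>))"
      by (simp add: answers_def)
    have s1: "(\<Sum>s<S. ck' s) \<le> (\<Sum>s<S. ck s)" by (rule sum_mono) (use each in auto)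
    have s2: "(\<Sum>s<S. ck s) \<le> (\<Sum>s<S. F')" by (rule sum_mono) (use each2 in auto)
    have s3: "(\<Sum>s<S. F') = real S * F'" by simp
    have "real L * (\<Sum>i<n. (1 / real S) ^ i) \<le> real S * F'"
      using IH cs0 s1 s2 s3 unfolding aeq by linarith
    then have "(1 / real S) * (real L * (\<Sum>i<n. (1 / real S) ^ i)) \<le> F'"
      using S1 by (simp add: field_simps)
    then have "real L * (\<Sum>i<Suc n. (1 / real S) ^ i) \<le> real L + F'"
      unfolding sum_geom_shift by (simp add: algebra_simps)
    then show ?thesis using split ms by linarith
  qed
qed

lemma converse:
  assumes th: "\<theta> < K"
  shows "rate P S K L W Q ans \<theta> \<le> 1 / (\<Sum>i<K. (1 / real S) ^ i)"
proof -
  define D where "D = (\<Sum>s<S. Hc P (As \<theta> s) (Qa \<theta>))"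
  define \<sigma> where "\<sigma> = (\<Sum>i<K. (1 / real S) ^ i)"
  have D: "D = (\<Sum>s<S. ent P (\<lambda>\<omega>. (As \<theta> s \<omega>, Qa \<theta> \<omega>)) - ent P (Qa \<theta>))"
    unfolding D_def by (simp add: Hc_ent)
  have cs: "ent P (\<lambda>\<omega>. (map (\<lambda>s. As \<theta> s \<omega>) [0..<S], Qa \<theta> \<omega>)) - ent P (Qa \<theta>) \<le> D"
    unfolding D by (rule cond_subadd)
  have e1: "ent P (\<lambda>\<omega>. (map (\<lambda>s. As \<theta> s \<omega>) [0..<S], Qa \<theta> \<omega>)) = ent P (\<lambda>\<omega>. (Aa \<theta> \<omega>, WT W {} \<omega>, Qa \<theta> \<omega>))"
    by (rule ent_cong_all) (simp add: answers_def WT_eq)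
  have e2: "ent P (Qa \<theta>) = ent P (\<lambda>\<omega>. (WT W {} \<omega>, Qa \<theta> \<omega>))"
    by (rule ent_cong_all) (simp add: WT_eq)
  have m: "real L * \<sigma> \<le> ent P (\<lambda>\<omega>. (Aa \<theta> \<omega>, WT W {} \<omega>, Qa \<theta> \<omega>)) - ent P (\<lambda>\<omega>. (WT W {} \<omega>, Qa \<theta> \<omega>))"
    unfolding \<sigma>_def by (rule main) (use th in auto)
  have LD: "real L * \<sigma> \<le> D" using cs e1 e2 m by linarith
  have sg: "1 \<le> \<sigma>"
  proof -
    have "(\<Sum>i<K. (1 / real S) ^ i) = 1 + (\<Sum>i<K - 1. (1 / real S) ^ Suc i)"
      using th sum.lessThan_Suc_shift[of "\<lambda>i. (1 / real S) ^ i" "K - 1"] by simp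
    moreover have "0 \<le> (\<Sum>i<K - 1. (1 / real S) ^ Suc i)" by (intro sum_nonneg) simp
    ultimately show ?thesis unfolding \<sigma>_def by linarith
  qed
  have r: "rate P S K L W Q ans \<theta> = real L / D" unfolding rate_def D_def by simp
  show ?thesis
  proof (cases "L = 0")
    case True
    then show ?thesis unfolding r \<sigma>_def[symmetric] using sg by simp
  next
    case False
    then have Lp: "0 < real L" by simp
    have p1: "0 < real L * \<sigma>" using Lp sg by (intro mult_pos_pos) auto
    have p2: "0 < D" using LD p1 by linarith
    have "real L / D \<le> real L / (real L * \<sigma>)"
      by (rule divide_left_mono) (use LD Lp p1 p2 in \<open>auto intro: mult_pos_pos\<close>)
    also have "\<dots> = 1 / \<sigma>" using Lp by simp
    finally show ?thesis unfolding r \<sigma>_def by simp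
  qed
qed

end

lemma take_drop_concat:
  "(\<forall>x\<in>set xs. length x = L) \<Longrightarrow> t < length xs \<Longrightarrow> take L (drop (t * L) (concat xs)) = xs ! t"
proof (induction xs arbitrary: t)
  case Nil
  then show ?case by simp
next
  case (Cons x xs)
  show ?case
  proof (cases t)
    case 0
    then show ?thesis using Cons.prems by simp
  next
    case (Suc t')
    have "drop (t * L) (concat (x # xs)) = drop (t' * L) (concat xs)"
      using Cons.prems Suc by simp
    then show ?thesis using Cons.IH[of t'] Cons.prems Suc by simp
  qed
qed

lemma existence:
  fixes P :: "'o::finite pmf"
  assumes S1: "1 \<le> S" and mok: "messages_ok P K L W"
  shows "\<exists>(Q :: nat \<Rightarrow> nat \<Rightarrow> 'o \<Rightarrow> 'q) ans dec. private_scheme P S K W Q ans dec"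
proof -
  define Q0 :: "nat \<Rightarrow> nat \<Rightarrow> 'o \<Rightarrow> 'q" where "Q0 = (\<lambda>t s \<omega>. undefined)"
  define ans0 :: "nat \<Rightarrow> 'q \<Rightarrow> bool list list \<Rightarrow> bool list" where "ans0 = (\<lambda>s q m. concat m)"
  define dec0 :: "nat \<Rightarrow> 'q list \<Rightarrow> bool list list \<Rightarrow> bool list" where "dec0 = (\<lambda>t q a. take L (drop (t * L) (hd a)))"
  have len: "\<forall>k<K. \<forall>\<omega>. length (W k \<omega>) = L" using mok unfolding messages_ok_def by blast
  have c1: "MI P (queries S Q0 t) (msgs K W) = 0" for t
  proof -
    have qc: "queries S Q0 t = (\<lambda>\<omega>. map (\<lambda>s. undefined) [0..<S])" unfolding queries_def Q0_def by simp
    have "ent P (\<lambda>\<omega>. (queries S Q0 t \<omega>, msgs K W \<omega>)) = ent P (msgs K W)"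
      unfolding qc by (rule ent_cong_all) simp
    then show ?thesis unfolding MI_ent qc using ent_const[of P "map (\<lambda>s. undefined) [0..<S]"] by simp
  qed
  have c2: "map_pmf (\<lambda>\<omega>. (Q0 0 s \<omega>, answer K W Q0 ans0 0 s \<omega>, msgs K W \<omega>)) P =
        map_pmf (\<lambda>\<omega>. (Q0 t s \<omega>, answer K W Q0 ans0 t s \<omega>, msgs K W \<omega>)) P" for s t
    unfolding Q0_def answer_def ans0_def by simp
  have c3: "dec0 t (queries S Q0 t \<omega>) (answers S K W Q0 ans0 t \<omega>) = W t \<omega>" if t: "t < K" for t \<omega>
  proof -
    have "hd (answers S K W Q0 ans0 t \<omega>) = concat (map (\<lambda>k. W k \<omega>) [0..<K])"
      using S1 unfolding answers_def answer_def ans0_def msgs_def by (simp add: upt_conv_Cons)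
    then show ?thesis unfolding dec0_def using take_drop_concat[of "map (\<lambda>k. W k \<omega>) [0..<K]" L t] len t
      by auto
  qed
  have "private_scheme P S K W Q0 ans0 dec0"
    unfolding private_scheme_def using c1 c2 c3 by blast
  then show ?thesis by blast
qed


theorem lemma1:
  fixes P :: "'o::finite pmf"
    and N U S K L \<theta> :: nat
    and W :: "nat \<Rightarrow> 'o \<Rightarrow> bool list"
  assumes "N \<ge> 1" and "U \<ge> 1" and "S = N + U - 1"
    and "messages_ok P K L W"
    and "\<theta> < K"
  shows "(\<exists>(Q :: nat \<Rightarrow> nat \<Rightarrow> 'o \<Rightarrow> 'q) ans dec. private_scheme P S K W Q ans dec) \<and>
         (\<forall>(Q :: nat \<Rightarrow> nat \<Rightarrow> 'o \<Rightarrow> 'q) ans dec. private_scheme P S K W Q ans dec \<longrightarrow>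
            rate P S K L W Q ans \<theta> \<le> 1 / (\<Sum>i<K. (1 / real S) ^ i))"
proof -
  have S1: "1 \<le> S" using assms(1,2,3) by simp
  show ?thesis
  proof
    show "\<exists>(Q :: nat \<Rightarrow> nat \<Rightarrow> 'o \<Rightarrow> 'q) ans dec. private_scheme P S K W Q ans dec"
      by (rule existence[OF S1 assms(4)])
  next
    show "\<forall>(Q :: nat \<Rightarrow> nat \<Rightarrow> 'o \<Rightarrow> 'q) ans dec. private_scheme P S K W Q ans dec \<longrightarrow>
            rate P S K L W Q ans \<theta> \<le> 1 / (\<Sum>i<K. (1 / real S) ^ i)"
    proof (intro allI impI)
      fix Q :: "nat \<Rightarrow> nat \<Rightarrow> 'o \<Rightarrow> 'q" and ans dec
      assume ps: "private_scheme P S K W Q ans dec"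
      show "rate P S K L W Q ans \<theta> \<le> 1 / (\<Sum>i<K. (1 / real S) ^ i)"
        by (rule converse[OF S1 assms(4) ps assms(5)])
    qed
  qed
qed

end
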